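(* Assume hypotheses (A) and (B) and that $\min_{1\le i\le d}\frac{1}{G_{ii}}(\sqrt{\mu_i}-\sqrt{\nu_i})^2=\frac{1}{G_{11}}(\sqrt{\mu_1}-\sqrt{\nu_1})^2$. Let $\alpha\in\mathcal{B}_{\{1\}}$ with $\{2,\dots,d\}\setminus J(\alpha)\ne\emptyset$. Then for every $i\in\{2,\dots,d\}\setminus J(\alpha)$ there exists $\tilde\alpha\in\mathcal{B}_{\{1\}}$ such that $J(\alpha)\cup\{i\}\subset J(\tilde\alpha)$ and $$R(\tilde\alpha)<\max\Bigl\{R(\alpha),\ -\frac{1}{G_{ii}}\bigl(\sqrt{\mu_i}-\sqrt{\nu_i}\bigr)^2\Bigr\}.$$
   Context: Jackson network with $d$ queues: arrival rates $\lambda_i\ge0$, service rates $\mu_i>0$, routing matrix $P=(p_{ij})_{i,j=1}^d$ nonnegative with $p_{ii}=0$, $\sum_jp_{ij}\le1$, $p_{i0}=1-\sum_jp_{ij}$. Hypothesis (A): the jump-rate kernel on $\mathbb{Z}^d$ (jumps $+\epsilon^i$ at rate $\lambda_i$, $-\epsilon^i$ at rate $\mu_ip_{i0}$, $\epsilon^j-\epsilon^i$ at rate $\mu_ip_{ij}$) is irreducible (equivalently spectral radius of $P$ $<1$ and for every $i$ some $\lambda_jp^{(n)}_{ji}>0$); then the traffic equations $\nu_j=\lambda_j+\sum_i\nu_ip_{ij}$ have a unique solution with $\nu_i>0$. Hypothesis (B): $\nu_i<\mu_i$ for all $i$. $G=(I-P)^{-1}$. For $\alpha\in\mathbb{R}^d$,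 $$R(\alpha)=\sum_{i=1}^d\mu_i\Bigl(\sum_{j=1}^dp_{ij}e^{\alpha^j-\alpha^i}+p_{i0}e^{-\alpha^i}-1\Bigr)+\sum_{i=1}^d\lambda_i(e^{\alpha^i}-1).$$ $\mathcal{B}_{\{1\}}$ is the set of $\alpha\in\mathbb{R}^d$ with $e^{\alpha^k}\le\sum_{j=1}^dp_{kj}e^{\alpha^j}+p_{k0}$ for all $k\ne1$. $J(\alpha)$ is the set of $k\in\{1,\dots,d\}$ with $e^{\alpha^k}=\sum_{j=1}^dp_{kj}e^{\alpha^j}+p_{k0}$. *)

theory Defs
  imports "HOL-Analysis.Analysis"
begin

text \<open>Queues are indexed by a finite type 'n (d = CARD('n)); the distinguished
queue "1" is an arbitrary fixed element k1 :: 'n. P is the routing matrix,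
lam the arrival rates, mu the service rates.\<close>

definition p0 :: "real^'n^'n \<Rightarrow> 'n::finite \<Rightarrow> real" where
  "p0 P i = 1 - (\<Sum>j\<in>UNIV. P$i$j)"

definition unitv :: "'n::finite \<Rightarrow> int^'n" where
  "unitv i = (\<chi> k. if k = i then 1 else 0)"

definition jackson_steps :: "real^'n \<Rightarrow> real^'n \<Rightarrow> real^'n^'n \<Rightarrow> (int^'n::finite) set" where
  "jackson_steps lam mu P =
     {unitv i | i. lam$i > 0}
   \<union> {- unitv i | i. mu$i * p0 P i > 0}
   \<union> {unitv j - unitv i | i j. i \<noteq> j \<and> mu$i * P$i$j > 0}"

definition hypA :: "real^'n \<Rightarrow> real^'n \<Rightarrow> real^'n^'n \<Rightarrow> bool" where
  "hypA lam mu P \<longleftrightarrow>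
     (\<forall>x y :: int^'n::finite. (\<lambda>a b. b - a \<in> jackson_steps lam mu P)\<^sup>*\<^sup>* x y)"

definition Rfun :: "real^'n \<Rightarrow> real^'n \<Rightarrow> real^'n^'n \<Rightarrow> real^'n::finite \<Rightarrow> real" where
  "Rfun lam mu P \<alpha> =
     (\<Sum>i\<in>UNIV. mu$i * ((\<Sum>j\<in>UNIV. P$i$j * exp (\<alpha>$j - \<alpha>$i)) + p0 P i * exp (- \<alpha>$i) - 1))
   + (\<Sum>i\<in>UNIV. lam$i * (exp (\<alpha>$i) - 1))"

definition Bset :: "real^'n^'n \<Rightarrow> 'n::finite \<Rightarrow> (real^'n) set" where
  "Bset P k1 = {\<alpha>. \<forall>k. k \<noteq> k1 \<longrightarrow> exp (\<alpha>$k) \<le> (\<Sum>j\<in>UNIV. P$k$j * exp (\<alpha>$j)) + p0 P k}"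

definition Jset :: "real^'n^'n \<Rightarrow> real^'n::finite \<Rightarrow> 'n set" where
  "Jset P \<alpha> = {k. exp (\<alpha>$k) = (\<Sum>j\<in>UNIV. P$k$j * exp (\<alpha>$j)) + p0 P k}"

end

theory Submission
  imports Defs
begin


lemma unitv_comp: "unitv i $ j = (if j = i then 1 else 0)"
  by (simp add: unitv_def)

lemma reach_mono:
  fixes S :: "'n::finite set"
  assumes X: "\<forall>s\<in>X. (\<Sum>j\<in>S. s$j) \<ge> (0::int)"
    and r: "(\<lambda>a b. b - a \<in> X)\<^sup>*\<^sup>* x y"
  shows "(\<Sum>j\<in>S. x$j) \<le> (\<Sum>j\<in>S. y$j)"
  using r
proof (induction rule: rtranclp_induct)
  case base then show ?case by simp
next
  case (step y z)
  have "(\<Sum>j\<in>S. z$j) = (\<Sum>j\<in>S. y$j) + (\<Sum>j\<in>S. (z - y)$j)"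
    by (simp add: sum_subtractf)
  moreover have "(\<Sum>j\<in>S. (z - y)$j) \<ge> 0" using X step.hyps(2) by blast
  ultimately show ?case using step.IH by linarith
qed

lemma sum_unitv: "(\<Sum>j\<in>S. unitv i $ j) = (if i \<in> S then (1::int) else 0)"
  by (simp add: unitv_comp)

lemma HA1:
  fixes P :: "real^'n::finite^'n"
  assumes A: "hypA lam mu P" and mu: "\<forall>i. mu$i > 0"
    and S: "i0 \<in> S"
    and cl: "\<forall>j\<in>S. \<forall>l. P$j$l > 0 \<longrightarrow> l \<in> S"
    and ex: "\<forall>j\<in>S. p0 P j = 0"
  shows False
proof -
  have X: "\<forall>s\<in>jackson_steps lam mu P. (\<Sum>j\<in>S. s$j) \<ge> (0::int)"
  proof
    fix s assume "s \<in> jackson_steps lam mu P"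
    then consider (a) i where "s = unitv i" | (b) i where "s = - unitv i" "mu$i * p0 P i > 0"
      | (c) i j where "s = unitv j - unitv i" "mu$i * P$i$j > 0"
      unfolding jackson_steps_def by blast
    then show "(\<Sum>j\<in>S. s$j) \<ge> 0"
    proof cases
      case a then show ?thesis by (simp add: sum_unitv)
    next
      case b
      then have "i \<notin> S" using ex by auto
      then show ?thesis using b by (simp add: sum_negf sum_unitv)
    next
      case c
      have "P$i$j > 0" using c(2) mu by (meson zero_less_mult_pos less_imp_le mu)
      then have "i \<in> S \<longrightarrow> j \<in> S" using cl by blast
      then show ?thesis using c by (auto simp add: sum_subtractf sum_unitv)
    qed
  qed
  have "(\<lambda>a b. b - a \<in> jackson_steps lam mu P)\<^sup>*\<^sup>* 0 (- unitv i0)"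
    using A unfolding hypA_def by blast
  from reach_mono[OF X this] show False using S by (simp add: sum_negf sum_unitv)
qed

lemma HA2:
  fixes P :: "real^'n::finite^'n"
  assumes A: "hypA lam mu P" and mu: "\<forall>i. mu$i > 0"
    and S: "i0 \<in> S"
    and nolam: "\<forall>j\<in>S. lam$j = 0"
    and noin: "\<forall>j. \<forall>l\<in>S. j \<notin> S \<longrightarrow> P$j$l = 0"
  shows False
proof -
  have X: "\<forall>s\<in>jackson_steps lam mu P. (\<Sum>j\<in>S. (-s)$j) \<ge> (0::int)"
  proof
    fix s assume "s \<in> jackson_steps lam mu P"
    then consider (a) i where "s = unitv i" "lam$i > 0" | (b) i where "s = - unitv i"
      | (c) i j where "s = unitv j - unitv i" "mu$i * P$i$j > 0"
      unfolding jackson_steps_def by blast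
    then show "(\<Sum>j\<in>S. (-s)$j) \<ge> 0"
    proof cases
      case a
      then have "i \<notin> S" using nolam by auto
      then show ?thesis using a by (simp add: sum_negf sum_unitv)
    next
      case b then show ?thesis by (simp add: sum_unitv)
    next
      case c
      have "P$i$j > 0" using c(2) mu by (meson zero_less_mult_pos less_imp_le mu)
      then have "j \<in> S \<longrightarrow> i \<in> S" using noin by force
      then show ?thesis using c by (auto simp add: sum_subtractf sum_unitv)
    qed
  qed
  have X': "\<forall>s\<in>uminus ` jackson_steps lam mu P. (\<Sum>j\<in>S. s$j) \<ge> (0::int)"
    using X by auto
  have r: "(\<lambda>a b. b - a \<in> jackson_steps lam mu P)\<^sup>*\<^sup>* 0 (unitv i0)"
    using A unfolding hypA_def by blast
  have "(\<lambda>a b. b - a \<in> uminus ` jackson_steps lam mu P)\<^sup>*\<^sup>* (- 0) (- unitv i0)"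
    using r
  proof (induction rule: rtranclp_induct)
    case base then show ?case by simp
  next
    case (step y z)
    have "(-z) - (-y) \<in> uminus ` jackson_steps lam mu P"
      using step.hyps(2) by (metis image_eqI minus_diff_eq minus_diff_minus)
    then show ?case using step.IH by (simp add: rtranclp.rtrancl_into_rtrancl)
  qed
  from reach_mono[OF X' this] show False using S by (simp add: sum_negf sum_unitv)
qed




lemma PR:
  fixes P :: "real^'n::finite^'n" and v :: "real^'n"
  assumes P_nonneg: "\<forall>i j. P$i$j \<ge> 0"
    and P_rows: "\<forall>i. (\<Sum>j\<in>UNIV. P$i$j) \<le> 1"
    and A: "hypA lam mu P" and mu: "\<forall>i. mu$i > 0"
    and bnd: "\<forall>j\<in>T. v$j \<ge> 0"
    and sup: "\<forall>j. j \<notin> T \<longrightarrow> v$j - (\<Sum>l\<in>UNIV. P$j$l * v$l) \<ge> 0"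
  shows "v$j \<ge> 0"
proof (rule ccontr)
  assume neg: "\<not> v$j \<ge> 0"
  define m where "m = Min (range (\<lambda>j. v$j))"
  have mle: "\<And>l. m \<le> v$l" unfolding m_def by simp
  obtain j0 where j0: "v$j0 = m" 
  proof -
    have "m \<in> range (\<lambda>j. v$j)" unfolding m_def by (rule Min_in) auto
    then show ?thesis using that by auto
  qed
  have mneg: "m < 0" using mle[of j] neg by linarith
  define S where "S = {l. v$l = m}"
  have key: "(\<forall>l. P$k$l > 0 \<longrightarrow> l \<in> S) \<and> p0 P k = 0" if kS: "k \<in> S" for k
  proof -
    have vk: "v$k = m" using kS S_def by simp
    have "k \<notin> T" using bnd vk mneg by force
    then have h: "m - (\<Sum>l\<in>UNIV. P$k$l * v$l) \<ge> 0" using sup vk by metis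
    have split: "(\<Sum>l\<in>UNIV. P$k$l * v$l) = (\<Sum>l\<in>UNIV. P$k$l * (v$l - m)) + m * (\<Sum>l\<in>UNIV. P$k$l)"
      
    proof -
      have "(\<Sum>l\<in>UNIV. P$k$l * v$l) = (\<Sum>l\<in>UNIV. P$k$l * (v$l - m) + m * P$k$l)"
        by (rule sum.cong) (auto simp: algebra_simps)
      also have "\<dots> = (\<Sum>l\<in>UNIV. P$k$l * (v$l - m)) + m * (\<Sum>l\<in>UNIV. P$k$l)"
        by (simp add: sum.distrib sum_distrib_left)
      finally show ?thesis .
    qed
    have t1: "\<forall>l\<in>UNIV. P$k$l * (v$l - m) \<ge> 0" using P_nonneg mle by simp
    have s1: "(\<Sum>l\<in>UNIV. P$k$l * (v$l - m)) \<ge> 0" using t1 by (simp add: sum_nonneg)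
    have s2: "m * ((\<Sum>l\<in>UNIV. P$k$l) - 1) \<ge> 0" using mneg P_rows
      by (simp add: mult_nonpos_nonpos)
    have "(\<Sum>l\<in>UNIV. P$k$l * (v$l - m)) + m * ((\<Sum>l\<in>UNIV. P$k$l) - 1) \<le> 0"
      using h split by (simp add: algebra_simps)
    then have z1: "(\<Sum>l\<in>UNIV. P$k$l * (v$l - m)) = 0" and z2: "m * ((\<Sum>l\<in>UNIV. P$k$l) - 1) = 0"
      using s1 s2 by linarith+
    from z1 t1 have "\<forall>l. P$k$l * (v$l - m) = 0" by (simp add: sum_nonneg_eq_0_iff)
    then have "\<forall>l. P$k$l > 0 \<longrightarrow> l \<in> S" by (auto simp: S_def) (metis less_irrefl)
    moreover from z2 mneg have "p0 P k = 0" by (simp add: p0_def)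
    ultimately show ?thesis by blast
  qed
  show False
    by (rule HA1[OF A mu, of j0 S]) (use j0 S_def key in auto)
qed




lemma IPv_comp:
  fixes P :: "real^'n::finite^'n"
  shows "((mat 1 - P) *v x)$j = x$j - (\<Sum>l\<in>UNIV. P$j$l * x$l)"
proof -
  have "((mat 1 - P) *v x)$j = (\<Sum>l\<in>UNIV. (if j = l then x$l else 0) - P$j$l * x$l)"
    unfolding matrix_vector_mult_def by (auto simp: mat_def left_diff_distrib intro!: sum.cong)
  also have "\<dots> = x$j - (\<Sum>l\<in>UNIV. P$j$l * x$l)" by (simp add: sum_subtractf)
  finally show ?thesis .
qed

lemma IPG_comp:
  fixes P G :: "real^'n::finite^'n"
  assumes "(mat 1 - P) ** G = mat 1"
  shows "G$j$c - (\<Sum>l\<in>UNIV. P$j$l * G$l$c) = (if j = c then 1 else 0)"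
proof -
  have "((mat 1 - P) ** G)$j$c = (mat 1 :: real^'n^'n)$j$c" using assms by simp
  moreover have "((mat 1 - P) ** G)$j$c = (\<Sum>l\<in>UNIV. (if j = l then G$l$c else 0) - P$j$l * G$l$c)"
    unfolding matrix_matrix_mult_def by (auto simp: mat_def left_diff_distrib intro!: sum.cong)
  moreover have "(\<Sum>l\<in>UNIV. (if j = l then G$l$c else 0) - P$j$l * G$l$c) = G$j$c - (\<Sum>l\<in>UNIV. P$j$l * G$l$c)"
    by (simp add: sum_subtractf)
  ultimately show ?thesis by (simp add: mat_def)
qed

lemma GIP_comp:
  fixes P G :: "real^'n::finite^'n"
  assumes "G ** (mat 1 - P) = mat 1"
  shows "G$j$c - (\<Sum>l\<in>UNIV. G$j$l * P$l$c) = (if j = c then 1 else 0)"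
proof -
  have "(G ** (mat 1 - P))$j$c = (mat 1 :: real^'n^'n)$j$c" using assms by simp
  moreover have "(G ** (mat 1 - P))$j$c = (\<Sum>l\<in>UNIV. (if l = c then G$j$l else 0) - G$j$l * P$l$c)"
    unfolding matrix_matrix_mult_def by (auto simp: mat_def right_diff_distrib intro!: sum.cong)
  moreover have "(\<Sum>l\<in>UNIV. (if l = c then G$j$l else 0) - G$j$l * P$l$c) = G$j$c - (\<Sum>l\<in>UNIV. G$j$l * P$l$c)"
    by (simp add: sum_subtractf)
  ultimately show ?thesis by (simp add: mat_def)
qed

lemma inv_IP:
  fixes P :: "real^'n::finite^'n"
  assumes P_nonneg: "\<forall>i j. P$i$j \<ge> 0"
    and P_rows: "\<forall>i. (\<Sum>j\<in>UNIV. P$i$j) \<le> 1"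
    and A: "hypA lam mu P" and mu: "\<forall>i. mu$i > 0"
  shows "(mat 1 - P) ** matrix_inv (mat 1 - P) = mat 1 \<and> matrix_inv (mat 1 - P) ** (mat 1 - P) = mat 1"
proof -
  have "\<forall>x. (mat 1 - P) *v x = 0 \<longrightarrow> x = 0"
  proof (intro allI impI)
    fix x :: "real^'n" assume h: "(mat 1 - P) *v x = 0"
    have c: "x$j - (\<Sum>l\<in>UNIV. P$j$l * x$l) = 0" for j
      using arg_cong[OF h, of "\<lambda>v. v$j"] by (simp add: IPv_comp)
    have p: "x$j \<ge> 0" for j
    proof (rule PR[OF P_nonneg P_rows A mu, of "{}"])
      show "\<forall>j. j \<notin> {} \<longrightarrow> 0 \<le> x $ j - (\<Sum>l\<in>UNIV. P $ j $ l * x $ l)"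
      proof (intro allI impI)
        fix j show "0 \<le> x $ j - (\<Sum>l\<in>UNIV. P $ j $ l * x $ l)" using c[of j] by linarith
      qed
    qed simp
    have n: "(-x)$j \<ge> 0" for j
    proof (rule PR[OF P_nonneg P_rows A mu, of "{}"])
      show "\<forall>j. j \<notin> {} \<longrightarrow> 0 \<le> (- x) $ j - (\<Sum>l\<in>UNIV. P $ j $ l * (- x) $ l)"
      proof (intro allI impI)
        fix j
        have "(\<Sum>l\<in>UNIV. P $ j $ l * (- x) $ l) = - (\<Sum>l\<in>UNIV. P $ j $ l * x $ l)"
          by (simp add: sum_negf)
        moreover have "(- x) $ j = - (x $ j)" by simp
        ultimately show "0 \<le> (- x) $ j - (\<Sum>l\<in>UNIV. P $ j $ l * (- x) $ l)" using c[of j] by linarith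
      qed
    qed simp
    show "x = 0"
    proof (rule vec_eq_iff[THEN iffD2], intro allI)
      fix j show "x$j = 0$j" using p[of j] n[of j] by simp
    qed
  qed
  then have "invertible (mat 1 - P)"
    unfolding invertible_left_inverse matrix_left_invertible_ker .
  then show ?thesis unfolding invertible_def matrix_inv_def by (rule someI_ex)
qed

locale gfacts =
  fixes P G :: "real^'n::finite^'n" and lam mu :: "real^'n"
  assumes P_nonneg: "\<forall>i j. P$i$j \<ge> 0"
    and P_rows: "\<forall>i. (\<Sum>j\<in>UNIV. P$i$j) \<le> 1"
    and A: "hypA lam mu P" and mu: "\<forall>i. mu$i > 0"
    and E1: "\<And>j c. G$j$c - (\<Sum>l\<in>UNIV. P$j$l * G$l$c) = (if j = c then 1 else 0)"
begin

lemma G_nonneg: "G$j$c \<ge> 0"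
proof -
  have "(\<chi> j. G$j$c)$j \<ge> 0"
  proof (rule PR[OF P_nonneg P_rows A mu, of "{}"])
    show "\<forall>j. j \<notin> {} \<longrightarrow> 0 \<le> (\<chi> j. G$j$c) $ j - (\<Sum>l\<in>UNIV. P $ j $ l * (\<chi> j. G$j$c) $ l)"
    proof (intro allI impI)
      fix j
      have "0 \<le> G$j$c - (\<Sum>l\<in>UNIV. P $ j $ l * G$l$c)" unfolding E1 by simp
      then show "0 \<le> (\<chi> j. G$j$c) $ j - (\<Sum>l\<in>UNIV. P $ j $ l * (\<chi> j. G$j$c) $ l)" by simp
    qed
  qed simp
  then show ?thesis by simp
qed

lemma G_diag: "G$b$b \<ge> 1"
proof -
  have "(\<Sum>l\<in>UNIV. P$b$l * G$l$b) \<ge> 0" using P_nonneg G_nonneg by (simp add: sum_nonneg)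
  moreover have "G$b$b - (\<Sum>l\<in>UNIV. P$b$l * G$l$b) = 1" by (subst E1) simp
  ultimately show ?thesis by linarith
qed

lemma G_le_diag: "G$j$b \<le> G$b$b"
proof -
  define v where "v = (\<chi> j. G$b$b - G$j$b)"
  have "v$j \<ge> 0"
  proof (rule PR[OF P_nonneg P_rows A mu, of "{b}"])
    show "\<forall>j\<in>{b}. 0 \<le> v $ j" by (simp add: v_def)
    show "\<forall>j. j \<notin> {b} \<longrightarrow> 0 \<le> v $ j - (\<Sum>l\<in>UNIV. P $ j $ l * v $ l)"
    proof (intro allI impI)
      fix j assume "j \<notin> {b}"
      then have e: "G$j$b - (\<Sum>l\<in>UNIV. P$j$l * G$l$b) = 0" by (subst E1) simp
      have s: "(\<Sum>l\<in>UNIV. P $ j $ l * v $ l) = (\<Sum>l\<in>UNIV. G$b$b * P$j$l - P$j$l * G$l$b)"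
        unfolding v_def by (rule sum.cong) (simp_all add: algebra_simps)
      have s2: "(\<Sum>l\<in>UNIV. G$b$b * P$j$l - P$j$l * G$l$b) = G$b$b * (\<Sum>l\<in>UNIV. P$j$l) - (\<Sum>l\<in>UNIV. P$j$l * G$l$b)"
        by (simp only: sum_subtractf sum_distrib_left)
      have vj: "v$j = G$b$b - G$j$b" by (simp add: v_def)
      have "v $ j - (\<Sum>l\<in>UNIV. P $ j $ l * v $ l) = G$b$b * (1 - (\<Sum>l\<in>UNIV. P$j$l)) - (G$j$b - (\<Sum>l\<in>UNIV. P$j$l * G$l$b))"
        unfolding s s2 vj by (simp add: right_diff_distrib)
      also have "\<dots> = G$b$b * (1 - (\<Sum>l\<in>UNIV. P$j$l))" unfolding e by simp
      also have "\<dots> \<ge> 0" using P_rows G_diag[of b] by simp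
      finally show "0 \<le> v $ j - (\<Sum>l\<in>UNIV. P $ j $ l * v $ l)" .
    qed
  qed
  then show ?thesis by (simp add: v_def)
qed

lemma KL_aux: "G$j$c * G$b$b - G$j$b * G$b$c \<ge> 0 \<and>
   (j \<noteq> b \<longrightarrow> (G$j$c * G$b$b - G$j$b * G$b$c) - (\<Sum>l\<in>UNIV. P$j$l * (G$l$c * G$b$b - G$l$b * G$b$c))
      = (if j = c then G$b$b else 0))"
proof -
  define v where "v = (\<chi> j. G$j$c * G$b$b - G$j$b * G$b$c)"
  have vj: "v$j = G$j$c * G$b$b - G$j$b * G$b$c" for j by (simp add: v_def)
  have eq: "v$j - (\<Sum>l\<in>UNIV. P$j$l * v$l) = (if j = c then G$b$b else 0)" if "j \<noteq> b" for j
  proof -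
    have s: "(\<Sum>l\<in>UNIV. P$j$l * v$l) = (\<Sum>l\<in>UNIV. G$b$b * (P$j$l * G$l$c) - G$b$c * (P$j$l * G$l$b))"
      unfolding vj by (rule sum.cong) (simp_all add: algebra_simps)
    have s2: "(\<Sum>l\<in>UNIV. G$b$b * (P$j$l * G$l$c) - G$b$c * (P$j$l * G$l$b)) = G$b$b * (\<Sum>l\<in>UNIV. P$j$l * G$l$c) - G$b$c * (\<Sum>l\<in>UNIV. P$j$l * G$l$b)"
      by (simp only: sum_subtractf sum_distrib_left)
    have e1: "G$j$b - (\<Sum>l\<in>UNIV. P$j$l * G$l$b) = 0" by (subst E1) (use that in simp)
    have e2: "G$j$c - (\<Sum>l\<in>UNIV. P$j$l * G$l$c) = (if j = c then 1 else 0)" by (rule E1)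
    have "v$j - (\<Sum>l\<in>UNIV. P$j$l * v$l) = G$b$b * (G$j$c - (\<Sum>l\<in>UNIV. P$j$l * G$l$c)) - G$b$c * (G$j$b - (\<Sum>l\<in>UNIV. P$j$l * G$l$b))"
      unfolding s s2 vj[of j] by (simp add: right_diff_distrib)
    also have "\<dots> = (if j = c then G$b$b else 0)" unfolding e1 e2 by simp
    finally show ?thesis .
  qed
  have vnn: "v$j \<ge> 0" for j
  proof (rule PR[OF P_nonneg P_rows A mu, of "{b}"])
    show "\<forall>j\<in>{b}. 0 \<le> v $ j" by (simp add: v_def)
    show "\<forall>j. j \<notin> {b} \<longrightarrow> 0 \<le> v $ j - (\<Sum>l\<in>UNIV. P $ j $ l * v $ l)"
    proof (intro allI impI)
      fix j assume "j \<notin> {b}"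
      then show "0 \<le> v $ j - (\<Sum>l\<in>UNIV. P $ j $ l * v $ l)" using eq[of j] G_diag[of b] by simp
    qed
  qed
  show ?thesis
  proof
    show "G$j$c * G$b$b - G$j$b * G$b$c \<ge> 0" using vnn[of j] unfolding vj .
    show "j \<noteq> b \<longrightarrow> (G$j$c * G$b$b - G$j$b * G$b$c) - (\<Sum>l\<in>UNIV. P$j$l * (G$l$c * G$b$b - G$l$b * G$b$c))
      = (if j = c then G$b$b else 0)"
      using eq[of j] unfolding vj by simp
  qed
qed

lemma KL: "G$j$b * G$b$c \<le> G$j$c * G$b$b"
  using KL_aux[of j c b] by simp

lemma KL_strict: assumes "c \<noteq> b" shows "G$c$b * G$b$c < G$c$c * G$b$b"
proof -
  have h: "(G$c$c * G$b$b - G$c$b * G$b$c) - (\<Sum>l\<in>UNIV. P$c$l * (G$l$c * G$b$b - G$l$b * G$b$c)) = G$b$b"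
    using KL_aux[of c c b] assms by simp
  have "(\<Sum>l\<in>UNIV. P$c$l * (G$l$c * G$b$b - G$l$b * G$b$c)) \<ge> 0"
    using KL_aux P_nonneg by (simp add: sum_nonneg)
  then show ?thesis using h G_diag[of b] by linarith
qed

end




lemma exp_tangent: "exp v * (u - v) \<le> exp u - exp (v::real)"
proof -
  have "1 + (u - v) \<le> exp (u - v)" by (rule exp_ge_add_one_self)
  then have "exp v * (1 + (u - v)) \<le> exp v * exp (u - v)" by simp
  then show ?thesis by (simp add: exp_diff algebra_simps)
qed

lemma ring_aux: "(d::real) * (X - Y) + M * (E * (- d)) + L * (F * d) = d * (X - Y - M * E + L * F)"
  by (simp add: algebra_simps)

lemma TL:
  fixes P :: "real^'n::finite^'n" and m lam \<alpha> \<beta> :: "real^'n"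
  assumes m: "\<forall>k. m$k \<ge> 0" and lam: "\<forall>k. lam$k \<ge> 0" and Pn: "\<forall>i j. P$i$j \<ge> 0"
    and p0n: "\<forall>k. p0 P k \<ge> 0"
    and stat: "\<forall>q. (\<Sum>k\<in>UNIV. m$k * P$k$q * exp (\<beta>$q - \<beta>$k))
                 - (\<Sum>j\<in>UNIV. m$q * P$q$j * exp (\<beta>$j - \<beta>$q))
                 - m$q * p0 P q * exp (- \<beta>$q) + lam$q * exp (\<beta>$q) = 0"
  shows "Rfun lam m P \<beta> \<le> Rfun lam m P \<alpha>"
proof -
  define d where "d = (\<lambda>k. \<alpha>$k - \<beta>$k)"
  define c where "c = (\<lambda>k j. m$k * P$k$j * exp (\<beta>$j - \<beta>$k))"
  define A where "A = (\<lambda>(\<gamma>::real^'n) k. (\<Sum>j\<in>UNIV. P$k$j * exp (\<gamma>$j - \<gamma>$k)))"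
  have RA: "Rfun lam m P \<gamma> = (\<Sum>k\<in>UNIV. m$k * (A \<gamma> k + p0 P k * exp (- \<gamma>$k) - 1))
       + (\<Sum>k\<in>UNIV. lam$k * (exp (\<gamma>$k) - 1))" for \<gamma>
    unfolding Rfun_def A_def by simp
  have inner: "m$k * (A \<alpha> k - A \<beta> k) = (\<Sum>j\<in>UNIV. m$k * P$k$j * (exp (\<alpha>$j - \<alpha>$k) - exp (\<beta>$j - \<beta>$k)))" for k
    unfolding A_def by (simp add: sum_distrib_left sum_subtractf[symmetric] algebra_simps)
  have diff: "Rfun lam m P \<alpha> - Rfun lam m P \<beta> =
     (\<Sum>k\<in>UNIV. m$k * (A \<alpha> k - A \<beta> k)
        + m$k * p0 P k * (exp (- \<alpha>$k) - exp (- \<beta>$k)))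
     + (\<Sum>k\<in>UNIV. lam$k * (exp (\<alpha>$k) - exp (\<beta>$k)))"
    unfolding RA
    by (simp add: sum_subtractf[symmetric] sum.distrib[symmetric] algebra_simps)
  have lb: "(\<Sum>k\<in>UNIV. m$k * (A \<alpha> k - A \<beta> k)
        + m$k * p0 P k * (exp (- \<alpha>$k) - exp (- \<beta>$k)))
     + (\<Sum>k\<in>UNIV. lam$k * (exp (\<alpha>$k) - exp (\<beta>$k)))
     \<ge> (\<Sum>k\<in>UNIV. (\<Sum>j\<in>UNIV. c k j * (d j - d k))
        + m$k * p0 P k * (exp (- \<beta>$k) * (- d k)))
     + (\<Sum>k\<in>UNIV. lam$k * (exp (\<beta>$k) * d k))"
  proof (intro add_mono sum_mono)
    fix k
    show "(\<Sum>j\<in>UNIV. c k j * (d j - d k)) \<le> m$k * (A \<alpha> k - A \<beta> k)"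
      unfolding inner
    proof (rule sum_mono)
    fix j
    have "exp (\<beta>$j - \<beta>$k) * ((\<alpha>$j - \<alpha>$k) - (\<beta>$j - \<beta>$k)) \<le> exp (\<alpha>$j - \<alpha>$k) - exp (\<beta>$j - \<beta>$k)"
      by (rule exp_tangent)
    moreover have "m$k * P$k$j \<ge> 0" using m Pn by simp
    ultimately have "m$k * P$k$j * (exp (\<beta>$j - \<beta>$k) * ((\<alpha>$j - \<alpha>$k) - (\<beta>$j - \<beta>$k)))
        \<le> m$k * P$k$j * (exp (\<alpha>$j - \<alpha>$k) - exp (\<beta>$j - \<beta>$k))"
      by (rule mult_left_mono)
    then show "c k j * (d j - d k) \<le> m$k * P$k$j * (exp (\<alpha>$j - \<alpha>$k) - exp (\<beta>$j - \<beta>$k))"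
      by (simp add: c_def d_def algebra_simps)
    qed
  next
    fix k
    have "exp (- \<beta>$k) * ((- \<alpha>$k) - (- \<beta>$k)) \<le> exp (- \<alpha>$k) - exp (- \<beta>$k)"
      by (rule exp_tangent)
    moreover have "m$k * p0 P k \<ge> 0" using m p0n by simp
    ultimately have "m$k * p0 P k * (exp (- \<beta>$k) * ((- \<alpha>$k) - (- \<beta>$k))) \<le> m$k * p0 P k * (exp (- \<alpha>$k) - exp (- \<beta>$k))"
      by (rule mult_left_mono)
    then show "m$k * p0 P k * (exp (- \<beta>$k) * (- d k)) \<le> m$k * p0 P k * (exp (- \<alpha>$k) - exp (- \<beta>$k))"
      by (simp add: d_def algebra_simps)
  next
    fix k
    have "exp (\<beta>$k) * (\<alpha>$k - \<beta>$k) \<le> exp (\<alpha>$k) - exp (\<beta>$k)" by (rule exp_tangent)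
    then show "lam$k * (exp (\<beta>$k) * d k) \<le> lam$k * (exp (\<alpha>$k) - exp (\<beta>$k))"
      using lam by (simp add: d_def mult_left_mono)
  qed
  have s0: "(\<Sum>k\<in>UNIV. (\<Sum>j\<in>UNIV. c k j * (d j - d k))) = (\<Sum>k\<in>UNIV. \<Sum>j\<in>UNIV. c k j * d j) - (\<Sum>k\<in>UNIV. \<Sum>j\<in>UNIV. c k j * d k)"
    by (simp add: right_diff_distrib sum_subtractf)
  have s1: "(\<Sum>k\<in>UNIV. \<Sum>j\<in>UNIV. c k j * d j) = (\<Sum>q\<in>UNIV. d q * (\<Sum>k\<in>UNIV. c k q))"
    by (subst sum.swap) (simp add: sum_distrib_left mult.commute)
  have s2: "(\<Sum>k\<in>UNIV. \<Sum>j\<in>UNIV. c k j * d k) = (\<Sum>q\<in>UNIV. d q * (\<Sum>j\<in>UNIV. c q j))"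
    by (simp add: sum_distrib_left mult.commute)
  have e1: "(\<Sum>k\<in>UNIV. (\<Sum>j\<in>UNIV. c k j * (d j - d k))) = (\<Sum>q\<in>UNIV. d q * ((\<Sum>k\<in>UNIV. c k q) - (\<Sum>j\<in>UNIV. c q j)))"
    unfolding s0 s1 s2 by (simp add: right_diff_distrib sum_subtractf)
  have "(\<Sum>k\<in>UNIV. (\<Sum>j\<in>UNIV. c k j * (d j - d k)) + m$k * p0 P k * (exp (- \<beta>$k) * (- d k)))
     + (\<Sum>k\<in>UNIV. lam$k * (exp (\<beta>$k) * d k))
     = (\<Sum>k\<in>UNIV. (\<Sum>j\<in>UNIV. c k j * (d j - d k))) + (\<Sum>k\<in>UNIV. m$k * p0 P k * (exp (- \<beta>$k) * (- d k)))
     + (\<Sum>k\<in>UNIV. lam$k * (exp (\<beta>$k) * d k))"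
    by (simp only: sum.distrib)
  also have "\<dots> = (\<Sum>q\<in>UNIV. d q * ((\<Sum>k\<in>UNIV. c k q) - (\<Sum>j\<in>UNIV. c q j)) + m$q * p0 P q * (exp (- \<beta>$q) * (- d q))
     + lam$q * (exp (\<beta>$q) * d q))"
    unfolding e1 by (simp only: sum.distrib)
  also have "\<dots> = (\<Sum>q\<in>UNIV. d q * ((\<Sum>k\<in>UNIV. c k q) - (\<Sum>j\<in>UNIV. c q j) - m$q * p0 P q * exp (- \<beta>$q) + lam$q * exp (\<beta>$q)))"
    by (rule sum.cong[OF refl], rule ring_aux)
  also have "\<dots> = 0"
  proof -
    have "\<forall>q. (\<Sum>k\<in>UNIV. c k q) - (\<Sum>j\<in>UNIV. c q j) - m$q * p0 P q * exp (- \<beta>$q) + lam$q * exp (\<beta>$q) = 0"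
      using stat unfolding c_def by simp
    then show ?thesis by simp
  qed
  finally have z: "(\<Sum>k\<in>UNIV. (\<Sum>j\<in>UNIV. c k j * (d j - d k))
        + m$k * p0 P k * (exp (- \<beta>$k) * (- d k)))
     + (\<Sum>k\<in>UNIV. lam$k * (exp (\<beta>$k) * d k)) = 0" .
  from lb have "0 \<le> Rfun lam m P \<alpha> - Rfun lam m P \<beta>" unfolding z diff .
  then show ?thesis by simp
qed




locale nufacts = gfacts +
  fixes nu :: "real^'a"
  assumes lam_nonneg: "\<forall>i. lam$i \<ge> 0"
    and traffic: "\<forall>j. nu$j = lam$j + (\<Sum>i\<in>UNIV. nu$i * P$i$j)"
begin

lemma nu_eq: "nu$c = (\<Sum>j\<in>UNIV. lam$j * G$j$c)"
proof -
  have lj: "lam$j = nu$j - (\<Sum>i\<in>UNIV. nu$i * P$i$j)" for j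
    using traffic[rule_format, of j] by linarith
  have "(\<Sum>j\<in>UNIV. lam$j * G$j$c) = (\<Sum>j\<in>UNIV. nu$j * G$j$c - (\<Sum>i\<in>UNIV. nu$i * P$i$j * G$j$c))"
    by (rule sum.cong[OF refl]) (simp add: lj left_diff_distrib sum_distrib_right)
  also have "\<dots> = (\<Sum>j\<in>UNIV. nu$j * G$j$c) - (\<Sum>j\<in>UNIV. \<Sum>i\<in>UNIV. nu$i * P$i$j * G$j$c)"
    by (simp only: sum_subtractf)
  also have "(\<Sum>j\<in>UNIV. \<Sum>i\<in>UNIV. nu$i * P$i$j * G$j$c) = (\<Sum>i\<in>UNIV. nu$i * (\<Sum>j\<in>UNIV. P$i$j * G$j$c))"
    by (subst sum.swap) (simp add: sum_distrib_left mult.assoc)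
  also have "(\<Sum>j\<in>UNIV. nu$j * G$j$c) - (\<Sum>i\<in>UNIV. nu$i * (\<Sum>j\<in>UNIV. P$i$j * G$j$c))
      = (\<Sum>i\<in>UNIV. nu$i * (G$i$c - (\<Sum>j\<in>UNIV. P$i$j * G$j$c)))"
    by (simp add: sum_subtractf right_diff_distrib)
  also have "\<dots> = (\<Sum>i\<in>UNIV. nu$i * (if i = c then 1 else 0))"
    by (rule sum.cong[OF refl]) (subst E1, rule refl)
  also have "\<dots> = (\<Sum>i\<in>UNIV. if i = c then nu$i else 0)" by (rule sum.cong) auto
  also have "\<dots> = nu$c" by simp
  finally show ?thesis by simp
qed

lemma nu_nonneg: "nu$c \<ge> 0"
  unfolding nu_eq using lam_nonneg G_nonneg by (simp add: sum_nonneg)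

lemma nu_pos: "nu$c > 0"
proof (rule ccontr)
  assume "\<not> nu$c > 0"
  then have c0: "nu$c = 0" using nu_nonneg[of c] by simp
  define S where "S = {l. nu$l = 0}"
  have z: "lam$l = 0 \<and> (\<forall>j. nu$j * P$j$l = 0)" if "l \<in> S" for l
  proof -
    have h: "0 = lam$l + (\<Sum>i\<in>UNIV. nu$i * P$i$l)" using traffic[rule_format, of l] that S_def by simp
    have t: "\<forall>i\<in>UNIV. nu$i * P$i$l \<ge> 0" using nu_nonneg P_nonneg by simp
    then have "(\<Sum>i\<in>UNIV. nu$i * P$i$l) \<ge> 0" by (intro sum_nonneg) blast
    then have a: "lam$l = 0" and b: "(\<Sum>i\<in>UNIV. nu$i * P$i$l) = 0" using h lam_nonneg[rule_format, of l] by linarith+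
    from b t have "\<forall>i. nu$i * P$i$l = 0" by (simp add: sum_nonneg_eq_0_iff)
    with a show ?thesis by blast
  qed
  show False
  proof (rule HA2[OF A mu, of c S])
    show "c \<in> S" using c0 S_def by simp
    show "\<forall>j\<in>S. lam$j = 0" using z by blast
    show "\<forall>j. \<forall>l\<in>S. j \<notin> S \<longrightarrow> P$j$l = 0"
    proof (intro allI ballI impI)
      fix j l assume "l \<in> S" "j \<notin> S"
      then have "nu$j \<noteq> 0" "nu$j * P$j$l = 0" using z S_def by auto
      then show "P$j$l = 0" by simp
    qed
  qed
qed

lemma nu_ineq: "nu$b * G$b$c \<le> nu$c * G$b$b"
proof -
  have "nu$b * G$b$c = (\<Sum>j\<in>UNIV. lam$j * (G$j$b * G$b$c))"
    unfolding nu_eq by (simp add: sum_distrib_right mult.assoc)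
  also have "\<dots> \<le> (\<Sum>j\<in>UNIV. lam$j * (G$j$c * G$b$b))"
    by (rule sum_mono, rule mult_left_mono[OF KL]) (use lam_nonneg in simp)
  also have "\<dots> = nu$c * G$b$b"
    unfolding nu_eq by (simp add: sum_distrib_right mult.assoc)
  finally show ?thesis .
qed

end




lemma Rform:
  fixes P :: "real^'n::finite^'n"
  shows "Rfun lam m P \<alpha> = (\<Sum>k\<in>UNIV. m$k * ((\<Sum>j\<in>UNIV. P$k$j * exp (\<alpha>$j)) + p0 P k - exp (\<alpha>$k)) / exp (\<alpha>$k))
      + (\<Sum>k\<in>UNIV. lam$k * (exp (\<alpha>$k) - 1))"
proof -
  have "m$k * ((\<Sum>j\<in>UNIV. P$k$j * exp (\<alpha>$j - \<alpha>$k)) + p0 P k * exp (- \<alpha>$k) - 1)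
      = m$k * ((\<Sum>j\<in>UNIV. P$k$j * exp (\<alpha>$j)) + p0 P k - exp (\<alpha>$k)) / exp (\<alpha>$k)" for k
  proof -
    have "(\<Sum>j\<in>UNIV. P$k$j * exp (\<alpha>$j - \<alpha>$k)) = (\<Sum>j\<in>UNIV. P$k$j * exp (\<alpha>$j)) / exp (\<alpha>$k)"
      by (simp add: exp_diff sum_divide_distrib)
    moreover have "exp (- \<alpha>$k) = 1 / exp (\<alpha>$k)" by (simp add: exp_minus field_simps)
    ultimately show ?thesis by (simp add: field_simps)
  qed
  then show ?thesis unfolding Rfun_def by simp
qed

lemma Rdiff:
  fixes P :: "real^'n::finite^'n"
  shows "Rfun lam m1 P \<alpha> - Rfun lam m2 P \<alpha> = (\<Sum>k\<in>UNIV. (m1$k - m2$k) * ((\<Sum>j\<in>UNIV. P$k$j * exp (\<alpha>$j)) + p0 P k - exp (\<alpha>$k)) / exp (\<alpha>$k))"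
  unfolding Rform by (simp add: sum_subtractf[symmetric] left_diff_distrib diff_divide_distrib)

lemma stat_conv:
  fixes P :: "real^'n::finite^'n" and x w :: "'n \<Rightarrow> real"
  assumes ex: "\<And>k. exp (\<beta>$k) = x k" and xp: "\<And>k. x k > 0" and mp: "\<And>k. mp$k = w k * x k"
  shows "(\<Sum>k\<in>UNIV. mp$k * P$k$q * exp (\<beta>$q - \<beta>$k))
                 - (\<Sum>j\<in>UNIV. mp$q * P$q$j * exp (\<beta>$j - \<beta>$q))
                 - mp$q * p0 P q * exp (- \<beta>$q) + lam$q * exp (\<beta>$q)
       = x q * (\<Sum>k\<in>UNIV. w k * P$k$q) - w q * ((\<Sum>j\<in>UNIV. P$q$j * x j) + p0 P q) + lam$q * x q"
proof -
  have e1: "(\<Sum>k\<in>UNIV. mp$k * P$k$q * exp (\<beta>$q - \<beta>$k)) = x q * (\<Sum>k\<in>UNIV. w k * P$k$q)"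
    unfolding sum_distrib_left
    by (rule sum.cong[OF refl]) (simp add: exp_diff ex mp field_simps less_imp_neq[OF xp, symmetric])
  have e2: "(\<Sum>j\<in>UNIV. mp$q * P$q$j * exp (\<beta>$j - \<beta>$q)) = w q * (\<Sum>j\<in>UNIV. P$q$j * x j)"
    unfolding sum_distrib_left
    by (rule sum.cong[OF refl]) (simp add: exp_diff ex mp field_simps less_imp_neq[OF xp, symmetric])
  have e3: "mp$q * p0 P q * exp (- \<beta>$q) = w q * p0 P q"
    using xp[of q] by (simp add: exp_minus ex mp field_simps)
  show ?thesis unfolding e1 e2 e3 by (simp add: ex algebra_simps)
qed

lemma big_ineq:
  fixes A B F H s1 m1 sk mk :: real
  assumes A: "A > 0" and B: "B > 0" and F: "F \<ge> 0" and H: "H \<ge> 0" and FB: "F \<le> B" and HA: "H \<le> A"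
    and FH: "F*H < A*B" and s1: "s1 > 0" "s1 < m1" and sk: "sk > 0" "sk < mk"
    and min1: "(m1 - s1)^2 / A \<le> (mk - sk)^2 / B"
    and i1: "s1^2 * F \<le> sk^2 * A" and i2: "sk^2 * H \<le> s1^2 * B"
  shows "(sk^2 + s1*(m1-s1)*F/A) * (1 + (m1-s1)*H/(s1*A)) < mk^2"
proof -
  define a where "a = m1 - s1"
  define b where "b = mk - sk"
  have a0: "a > 0" and b0: "b > 0" using s1 sk by (auto simp: a_def b_def)
  have ab: "a^2 * B \<le> b^2 * A"
    using min1 A B unfolding a_def[symmetric] b_def[symmetric] by (simp add: field_simps)
  have T2: "a * sk^2 * H / (s1 * A) \<le> b * sk"
  proof -
    have "(a * sk * H)^2 \<le> (b * s1 * A)^2"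
    proof -
      have "(a * sk * H)^2 = (sk^2 * H) * (a^2 * H)" by (simp add: power2_eq_square)
      also have "\<dots> \<le> (s1^2 * B) * (a^2 * H)"
        by (rule mult_right_mono[OF i2]) (use H in simp)
      also have "\<dots> = s1^2 * (a^2 * B) * H" by simp
      also have "\<dots> \<le> s1^2 * (b^2 * A) * H"
        by (intro mult_right_mono mult_left_mono ab) (use H in auto)
      also have "\<dots> \<le> s1^2 * (b^2 * A) * A"
        by (intro mult_left_mono HA) (use A in auto)
      also have "\<dots> = (b * s1 * A)^2" by (simp add: power2_eq_square)
      finally show ?thesis .
    qed
    then have "a * sk * H \<le> b * s1 * A"
      by (rule power2_le_imp_le) (use b0 s1 A in auto)
    then have "a * sk * H * sk \<le> b * s1 * A * sk" using sk by (simp add: mult_right_mono)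
    then show ?thesis using s1 A by (simp add: field_simps power2_eq_square)
  qed
  have T3: "s1 * a * F / A \<le> b * sk"
  proof -
    have aF: "a^2 * F \<le> b^2 * A"
    proof -
      have "a^2 * F \<le> a^2 * B" using FB by (simp add: mult_left_mono)
      then show ?thesis using ab by linarith
    qed
    have "(s1 * a * F)^2 \<le> (b * sk * A)^2"
    proof -
      have "(s1 * a * F)^2 = (s1^2 * F) * (a^2 * F)" by (simp add: power2_eq_square)
      also have "\<dots> \<le> (sk^2 * A) * (b^2 * A)"
        by (intro mult_mono i1 aF) (use A F in auto)
      also have "\<dots> = (b * sk * A)^2" by (simp add: power2_eq_square)
      finally show ?thesis .
    qed
    then have "s1 * a * F \<le> b * sk * A"
      by (rule power2_le_imp_le) (use b0 sk A in auto)
    then show ?thesis using A by (simp add: field_simps)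
  qed
  have T4: "a^2 * F * H / A^2 < b^2"
  proof -
    have "a^2 * F * H * B \<le> b^2 * A * F * H"
    proof -
      have "a^2 * B * (F * H) \<le> b^2 * A * (F * H)" using ab F H by (simp add: mult_right_mono)
      then show ?thesis by (simp add: algebra_simps)
    qed
    also have "\<dots> < b^2 * A * (A * B)"
    proof -
      have "b^2 * A > 0" using b0 A by simp
      then have "b^2 * A * (F * H) < b^2 * A * (A * B)" using FH by (rule mult_strict_left_mono[rotated])
      then show ?thesis by (simp add: algebra_simps)
    qed
    finally have "a^2 * F * H * B < b^2 * A^2 * B" by (simp add: power2_eq_square algebra_simps)
    then have "a^2 * F * H < b^2 * A^2" using B by simp
    then show ?thesis using A by (simp add: field_simps)
  qed
  have exp: "(sk^2 + s1*a*F/A) * (1 + a*H/(s1*A)) = sk^2 + a * sk^2 * H / (s1 * A) + s1 * a * F / A + a^2 * F * H / A^2"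
    using s1 A by (simp add: field_simps power2_eq_square)
  have "mk^2 = sk^2 + 2 * (b * sk) + b^2" by (simp add: b_def power2_eq_square algebra_simps)
  then show ?thesis unfolding a_def[symmetric] exp using T2 T3 T4 by linarith
qed


lemma member_le_sum_nonneg:
  fixes f :: "'n::finite \<Rightarrow> real"
  assumes "\<And>k. k \<noteq> i \<Longrightarrow> f k \<ge> 0"
  shows "f i \<le> (\<Sum>k\<in>UNIV. f k)"
  by (rule member_le_sum) (use assms in auto)

theorem lemma8p1:
  fixes lam mu nu :: "real^'n::finite" and P :: "real^'n^'n" and k1 :: 'n
    and \<alpha> :: "real^'n"
  assumes lam_nonneg: "\<forall>i. lam$i \<ge> 0"
    and mu_pos: "\<forall>i. mu$i > 0"
    and P_nonneg: "\<forall>i j. P$i$j \<ge> 0"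
    and P_diag: "\<forall>i. P$i$i = 0"
    and P_rows: "\<forall>i. (\<Sum>j\<in>UNIV. P$i$j) \<le> 1"
    and A: "hypA lam mu P"
    and traffic: "\<forall>j. nu$j = lam$j + (\<Sum>i\<in>UNIV. nu$i * P$i$j)"
    and B: "\<forall>i. nu$i < mu$i"
    and G_def: "G = matrix_inv (mat 1 - P)"
    and min1: "\<forall>i. (sqrt (mu$k1) - sqrt (nu$k1))\<^sup>2 / G$k1$k1
                     \<le> (sqrt (mu$i) - sqrt (nu$i))\<^sup>2 / G$i$i"
    and alpha_B: "\<alpha> \<in> Bset P k1"
    and nonempty: "(UNIV - {k1}) - Jset P \<alpha> \<noteq> {}"
  shows "\<forall>i \<in> (UNIV - {k1}) - Jset P \<alpha>. \<exists>\<alpha>' \<in> Bset P k1.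
            Jset P \<alpha> \<union> {i} \<subseteq> Jset P \<alpha>' \<and>
            Rfun lam mu P \<alpha>' < max (Rfun lam mu P \<alpha>)
                                   (- (1 / G$i$i) * (sqrt (mu$i) - sqrt (nu$i))\<^sup>2)"
proof (intro ballI)
  fix i assume iS: "i \<in> (UNIV - {k1}) - Jset P \<alpha>"
  have ik1: "i \<noteq> k1" and iJ: "i \<notin> Jset P \<alpha>" using iS by auto
  have inv: "(mat 1 - P) ** G = mat 1 \<and> G ** (mat 1 - P) = mat 1"
    using inv_IP[OF P_nonneg P_rows A mu_pos] G_def by simp
  have E1: "\<And>j c. G$j$c - (\<Sum>l\<in>UNIV. P$j$l * G$l$c) = (if j = c then 1 else 0)"
    using inv IPG_comp by blast
  have E2: "\<And>j c. G$j$c - (\<Sum>l\<in>UNIV. G$j$l * P$l$c) = (if j = c then 1 else 0)"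
    using inv GIP_comp by blast
  interpret nf: nufacts P G lam mu nu
    by (unfold_locales; (fact P_nonneg | fact P_rows | fact A | fact mu_pos | fact E1 | fact lam_nonneg | fact traffic))
  have p0n: "\<forall>k. p0 P k \<ge> 0" using P_rows by (simp add: p0_def)
  have p0s: "(\<Sum>j\<in>UNIV. P$k$j) + p0 P k = 1" for k by (simp add: p0_def)
  define r where "r = (\<lambda>k. (\<Sum>j\<in>UNIV. P$k$j * exp (\<alpha>$j)) + p0 P k - exp (\<alpha>$k))"
  have rB: "r k \<ge> 0" if "k \<noteq> k1" for k
    using alpha_B that unfolding Bset_def r_def by auto
  have ri: "r i > 0"
  proof -
    have "r i \<noteq> 0" using iJ unfolding Jset_def r_def by auto
    then show ?thesis using rB[OF ik1] by linarith
  qed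
  have Rd: "Rfun lam m1 P \<beta> - Rfun lam m2 P \<beta> = (\<Sum>k\<in>UNIV. (m1$k - m2$k) * ((\<Sum>j\<in>UNIV. P$k$j * exp (\<beta>$j)) + p0 P k - exp (\<beta>$k)) / exp (\<beta>$k))"
    for m1 m2 \<beta> by (rule Rdiff)
  show "\<exists>\<alpha>' \<in> Bset P k1.
            Jset P \<alpha> \<union> {i} \<subseteq> Jset P \<alpha>' \<and>
            Rfun lam mu P \<alpha>' < max (Rfun lam mu P \<alpha>)
                                   (- (1 / G$i$i) * (sqrt (mu$i) - sqrt (nu$i))\<^sup>2)"
  proof (cases "k1 \<in> Jset P \<alpha>")
    case True
    then have rk1: "r k1 = 0" unfolding Jset_def r_def by simp
    have rall: "r k \<ge> 0" for k using rB rk1 by (cases "k = k1") auto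
    have z0: "(\<Sum>j\<in>UNIV. P$k$j * exp ((0::real^'n)$j)) + p0 P k = exp ((0::real^'n)$k)" for k
      using p0s[of k] by simp
    have inB: "(0::real^'n) \<in> Bset P k1" unfolding Bset_def using z0 by simp
    have inJ: "Jset P (0::real^'n) = UNIV" unfolding Jset_def using z0 by simp
    have R0: "Rfun lam m P (0::real^'n) = 0" for m
      unfolding Rform using p0s by simp
    have TLnu: "Rfun lam nu P 0 \<le> Rfun lam nu P \<alpha>"
    proof (rule TL)
      show "\<forall>k. nu$k \<ge> 0" using nf.nu_nonneg by simp
      show "\<forall>k. lam$k \<ge> 0" by (rule lam_nonneg)
      show "\<forall>i j. P$i$j \<ge> 0" by (rule P_nonneg)
      show "\<forall>k. p0 P k \<ge> 0" by (rule p0n)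
      show "\<forall>q. (\<Sum>k\<in>UNIV. nu$k * P$k$q * exp ((0::real^'n)$q - (0::real^'n)$k))
                 - (\<Sum>j\<in>UNIV. nu$q * P$q$j * exp ((0::real^'n)$j - (0::real^'n)$q))
                 - nu$q * p0 P q * exp (- (0::real^'n)$q) + lam$q * exp ((0::real^'n)$q) = 0"
      proof
        fix q
        have t: "nu$q = lam$q + (\<Sum>k\<in>UNIV. nu$k * P$k$q)" using traffic by blast
        have "(\<Sum>j\<in>UNIV. nu$q * P$q$j) + nu$q * p0 P q = nu$q * ((\<Sum>j\<in>UNIV. P$q$j) + p0 P q)"
          by (simp add: sum_distrib_left algebra_simps)
        also have "\<dots> = nu$q" using p0s[of q] by simp
        finally have "(\<Sum>j\<in>UNIV. nu$q * P$q$j) + nu$q * p0 P q = nu$q" .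
        moreover have "(\<Sum>k\<in>UNIV. nu$k * P$k$q * exp ((0::real^'n)$q - (0::real^'n)$k))
                 - (\<Sum>j\<in>UNIV. nu$q * P$q$j * exp ((0::real^'n)$j - (0::real^'n)$q))
                 - nu$q * p0 P q * exp (- (0::real^'n)$q) + lam$q * exp ((0::real^'n)$q)
            = (\<Sum>k\<in>UNIV. nu$k * P$k$q) - (\<Sum>j\<in>UNIV. nu$q * P$q$j) - nu$q * p0 P q + lam$q"
          by simp
        ultimately show "(\<Sum>k\<in>UNIV. nu$k * P$k$q * exp ((0::real^'n)$q - (0::real^'n)$k))
                 - (\<Sum>j\<in>UNIV. nu$q * P$q$j * exp ((0::real^'n)$j - (0::real^'n)$q))
                 - nu$q * p0 P q * exp (- (0::real^'n)$q) + lam$q * exp ((0::real^'n)$q) = 0"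
          using t by linarith
      qed
    qed
    have "(mu$i - nu$i) * r i / exp (\<alpha>$i) \<le> (\<Sum>k\<in>UNIV. (mu$k - nu$k) * r k / exp (\<alpha>$k))"
    proof (rule member_le_sum_nonneg)
      fix k show "0 \<le> (mu$k - nu$k) * r k / exp (\<alpha>$k)"
        using B rall[of k] by (simp add: less_imp_le)
    qed
    moreover have "(mu$i - nu$i) * r i / exp (\<alpha>$i) > 0" using B ri by simp
    ultimately have "Rfun lam mu P \<alpha> - Rfun lam nu P \<alpha> > 0" unfolding Rd r_def by linarith
    then have "Rfun lam mu P \<alpha> > 0" using TLnu R0[of nu] by linarith
    then have "Rfun lam mu P 0 < max (Rfun lam mu P \<alpha>) (- (1 / G$i$i) * (sqrt (mu$i) - sqrt (nu$i))\<^sup>2)"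
      using R0[of mu] by simp
    then show ?thesis using inB inJ by blast
  next
    case False
    define s1 where "s1 = sqrt (nu$k1)"
    define m1 where "m1 = sqrt (mu$k1)"
    define t where "t = m1 / s1"
    define Ag where "Ag = G$k1$k1"
    define \<gamma> where "\<gamma> = nu$k1 * (t - 1) / Ag"
    define xs where "xs = (\<lambda>k. 1 + (t - 1) * G$k$k1 / Ag)"
    define \<alpha>s where "\<alpha>s = (\<chi> k. ln (xs k))"
    define w where "w = (\<lambda>k. nu$k + \<gamma> * G$k1$k)"
    define mp where "mp = (\<chi> k. w k * xs k)"
    have s1p: "s1 > 0" unfolding s1_def using nf.nu_pos by simp
    have s1m1: "s1 < m1" unfolding s1_def m1_def using B by simp
    have t1: "t > 1" unfolding t_def using s1p s1m1 by simp
    have Ag1: "Ag \<ge> 1" unfolding Ag_def by (rule nf.G_diag)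
    have xs1: "xs k \<ge> 1" for k
      unfolding xs_def using t1 Ag1 nf.G_nonneg[of k k1] by simp
    have xsp: "xs k > 0" for k using xs1[of k] by simp
    have exs: "exp (\<alpha>s$k) = xs k" for k unfolding \<alpha>s_def using xsp[of k] by simp
    have xsk1: "xs k1 = t" unfolding xs_def Ag_def using Ag1 Ag_def by simp
    have g0: "\<gamma> > 0" unfolding \<gamma>_def using nf.nu_pos[of k1] t1 Ag1 by simp
    have w0: "w k \<ge> 0" for k unfolding w_def using nf.nu_nonneg[of k] g0 nf.G_nonneg[of k1 k] by simp
    have rs: "(\<Sum>j\<in>UNIV. P$k$j * xs j) + p0 P k - xs k = - (((t - 1) / Ag) * (if k = k1 then 1 else 0))" for k
    proof -
      define c where "c = (t - 1) / Ag"
      define d where "d = (if k = k1 then 1 else (0::real))"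
      have x: "xs k = 1 + c * G$k$k1" unfolding xs_def c_def by simp
      have s: "(\<Sum>j\<in>UNIV. P$k$j * xs j) = (\<Sum>j\<in>UNIV. P$k$j) + c * (\<Sum>j\<in>UNIV. P$k$j * G$j$k1)"
        unfolding xs_def c_def by (simp add: algebra_simps sum.distrib sum_distrib_left)
      have sg: "(\<Sum>j\<in>UNIV. P$k$j * G$j$k1) = G$k$k1 - d"
        using E1[of k k1] unfolding d_def by linarith
      have h1: "c * (\<Sum>j\<in>UNIV. P$k$j * G$j$k1) = c * (G$k$k1 - d)" unfolding sg ..
      have h2: "c * (G$k$k1 - d) - c * G$k$k1 = - (c * d)" by (simp add: algebra_simps)
      have "(\<Sum>j\<in>UNIV. P$k$j * xs j) + p0 P k - xs k = - (c * d)"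
        unfolding s x using h1 h2 p0s[of k] by linarith
      then show ?thesis unfolding c_def d_def .
    qed
    have rs0: "(\<Sum>j\<in>UNIV. P$k$j * exp (\<alpha>s$j)) + p0 P k - exp (\<alpha>s$k) = 0" if "k \<noteq> k1" for k
      using rs[of k] that by (simp add: exs)
    have inB: "\<alpha>s \<in> Bset P k1" unfolding Bset_def using rs0 by (auto simp: algebra_simps)
    have inJ: "Jset P \<alpha> \<union> {i} \<subseteq> Jset P \<alpha>s"
    proof
      fix k assume "k \<in> Jset P \<alpha> \<union> {i}"
      then have "k \<noteq> k1" using False ik1 by auto
      then show "k \<in> Jset P \<alpha>s" unfolding Jset_def using rs0[of k] by (simp add: algebra_simps)
    qed
    have mpk1: "mp$k1 = mu$k1"
    proof -
      have "mp$k1 = (nu$k1 + \<gamma> * Ag) * t" unfolding mp_def w_def using xsk1 Ag_def by simp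
      also have "\<dots> = nu$k1 * t^2" unfolding \<gamma>_def using Ag1 by (simp add: field_simps power2_eq_square)
      also have "\<dots> = m1^2" unfolding t_def s1_def[symmetric]
        using s1p by (simp add: s1_def power_divide)
      also have "\<dots> = mu$k1" unfolding m1_def using mu_pos by (simp add: less_imp_le)
      finally show ?thesis .
    qed
    have mpk: "mp$k < mu$k" if "k \<noteq> k1" for k
    proof -
      define sk where "sk = sqrt (nu$k)"
      define mk where "mk = sqrt (mu$k)"
      have e: "mp$k = (sk^2 + s1*(m1-s1)*G$k1$k/Ag) * (1 + (m1-s1)*G$k$k1/(s1*Ag))"
      proof -
        have nus: "nu$k1 = s1 * s1" unfolding s1_def using nf.nu_nonneg[of k1] by simp
        have "\<gamma> = s1*(m1-s1)/Ag" unfolding \<gamma>_def t_def nus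
          using s1p Ag1 by (simp add: field_simps)
        moreover have "xs k = 1 + (m1-s1)*G$k$k1/(s1*Ag)" unfolding xs_def t_def
          using s1p by (simp add: field_simps)
        moreover have "sk^2 = nu$k" unfolding sk_def using nf.nu_nonneg[of k] by simp
        ultimately show ?thesis unfolding mp_def w_def by simp
      qed
      have "(sk^2 + s1*(m1-s1)*G$k1$k/Ag) * (1 + (m1-s1)*G$k$k1/(s1*Ag)) < mk^2"
      proof (rule big_ineq)
        show "Ag > 0" using Ag1 by simp
        show "G$k$k > 0" using nf.G_diag[of k] by simp
        show "G$k1$k \<ge> 0" "G$k$k1 \<ge> 0" by (rule nf.G_nonneg)+
        show "G$k1$k \<le> G$k$k" by (rule nf.G_le_diag)
        show "G$k$k1 \<le> Ag" unfolding Ag_def by (rule nf.G_le_diag)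
        show "G$k1$k * G$k$k1 < Ag * G$k$k"
          using nf.KL_strict[of k k1] that unfolding Ag_def by (simp add: mult.commute)
        show "s1 > 0" "s1 < m1" by (rule s1p, rule s1m1)
        show "sk > 0" unfolding sk_def using nf.nu_pos by simp
        show "sk < mk" unfolding sk_def mk_def using B by simp
        show "(m1 - s1)^2 / Ag \<le> (mk - sk)^2 / G$k$k"
          using min1 unfolding m1_def s1_def mk_def sk_def Ag_def by blast
        show "s1^2 * G$k1$k \<le> sk^2 * Ag"
          unfolding s1_def sk_def Ag_def using nf.nu_ineq[of k1 k] nf.nu_nonneg by simp
        show "sk^2 * G$k$k1 \<le> s1^2 * G$k$k"
          unfolding s1_def sk_def using nf.nu_ineq[of k k1] nf.nu_nonneg by simp
      qed
      moreover have "mk^2 = mu$k" unfolding mk_def using mu_pos by (simp add: less_imp_le)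
      ultimately show ?thesis using e by simp
    qed
    have mp0: "\<forall>k. mp$k \<ge> 0" unfolding mp_def using w0 xsp by (simp add: less_imp_le)
    have TLmp: "Rfun lam mp P \<alpha>s \<le> Rfun lam mp P \<alpha>"
    proof (rule TL[OF mp0 lam_nonneg P_nonneg p0n])
      show "\<forall>q. (\<Sum>k\<in>UNIV. mp$k * P$k$q * exp (\<alpha>s$q - \<alpha>s$k))
                 - (\<Sum>j\<in>UNIV. mp$q * P$q$j * exp (\<alpha>s$j - \<alpha>s$q))
                 - mp$q * p0 P q * exp (- \<alpha>s$q) + lam$q * exp (\<alpha>s$q) = 0"
      proof
        fix q
        have sc: "(\<Sum>k\<in>UNIV. mp$k * P$k$q * exp (\<alpha>s$q - \<alpha>s$k))
                 - (\<Sum>j\<in>UNIV. mp$q * P$q$j * exp (\<alpha>s$j - \<alpha>s$q))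
                 - mp$q * p0 P q * exp (- \<alpha>s$q) + lam$q * exp (\<alpha>s$q)
           = xs q * (\<Sum>k\<in>UNIV. w k * P$k$q) - w q * ((\<Sum>j\<in>UNIV. P$q$j * xs j) + p0 P q) + lam$q * xs q"
          by (rule stat_conv) (auto simp: exs xsp mp_def)
        have wP: "(\<Sum>k\<in>UNIV. w k * P$k$q) = w q - lam$q - \<gamma> * (if k1 = q then 1 else 0)"
        proof -
          have "(\<Sum>k\<in>UNIV. w k * P$k$q) = (\<Sum>k\<in>UNIV. nu$k * P$k$q) + \<gamma> * (\<Sum>k\<in>UNIV. G$k1$k * P$k$q)"
            unfolding w_def by (simp add: algebra_simps sum.distrib sum_distrib_left)
          moreover have "(\<Sum>k\<in>UNIV. nu$k * P$k$q) = nu$q - lam$q" using traffic[rule_format, of q] by linarith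
          moreover have "(\<Sum>k\<in>UNIV. G$k1$k * P$k$q) = G$k1$q - (if k1 = q then 1 else 0)"
            using E2[of k1 q] by linarith
          ultimately show ?thesis unfolding w_def by (simp add: algebra_simps)
        qed
        have xP: "(\<Sum>j\<in>UNIV. P$q$j * xs j) + p0 P q = xs q - ((t - 1) / Ag) * (if q = k1 then 1 else 0)"
          using rs[of q] by linarith
        show "(\<Sum>k\<in>UNIV. mp$k * P$k$q * exp (\<alpha>s$q - \<alpha>s$k))
                 - (\<Sum>j\<in>UNIV. mp$q * P$q$j * exp (\<alpha>s$j - \<alpha>s$q))
                 - mp$q * p0 P q * exp (- \<alpha>s$q) + lam$q * exp (\<alpha>s$q) = 0"
        proof (cases "q = k1")
          case True
          have "w k1 = nu$k1 + \<gamma> * Ag" unfolding w_def Ag_def by simp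
          then have "w k1 * ((t - 1) / Ag) - \<gamma> * t = 0"
            unfolding \<gamma>_def using Ag1 by (simp add: field_simps)
          then show ?thesis unfolding sc wP xP using True xsk1 by (simp add: algebra_simps)
        next
          case False
          then show ?thesis unfolding sc wP xP by (simp add: algebra_simps)
        qed
      qed
    qed
    have d1: "Rfun lam mu P \<alpha> - Rfun lam mp P \<alpha> > 0"
    proof -
      have "(mu$i - mp$i) * r i / exp (\<alpha>$i) \<le> (\<Sum>k\<in>UNIV. (mu$k - mp$k) * r k / exp (\<alpha>$k))"
      proof (rule member_le_sum_nonneg)
        fix k show "0 \<le> (mu$k - mp$k) * r k / exp (\<alpha>$k)"
        proof (cases "k = k1")
          case True then show ?thesis using mpk1 by simp
        next
          case False then show ?thesis using mpk[of k] rB[of k] by simp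
        qed
      qed
      moreover have "(mu$i - mp$i) * r i / exp (\<alpha>$i) > 0" using mpk[OF ik1] ri by simp
      ultimately show ?thesis unfolding Rd r_def by linarith
    qed
    have d2: "Rfun lam mu P \<alpha>s - Rfun lam mp P \<alpha>s = 0"
      unfolding Rd
    proof (rule sum.neutral, intro ballI)
      fix k show "(mu$k - mp$k) * ((\<Sum>j\<in>UNIV. P$k$j * exp (\<alpha>s$j)) + p0 P k - exp (\<alpha>s$k)) / exp (\<alpha>s$k) = 0"
        using mpk1 rs0[of k] by (cases "k = k1") auto
    qed
    have "Rfun lam mu P \<alpha>s < Rfun lam mu P \<alpha>" using d1 d2 TLmp by linarith
    then have "Rfun lam mu P \<alpha>s < max (Rfun lam mu P \<alpha>) (- (1 / G$i$i) * (sqrt (mu$i) - sqrt (nu$i))\<^sup>2)"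
      by simp
    then show ?thesis using inB inJ by blast
  qed
qed


end
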